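(* Let $X$ be a $\mathsf{T_{z}S}$-closed semigroup and $e\in E(X)$ an idempotent such that the semigroup $H_e\cap Z(X)$ is bounded. Then for every sequence $(x_n)_{n\in\omega}$ of elements of $\big(\sqrt[\infty]{e}\cap Z(X)\big)\setminus H_e$ there exists $n\in\omega$ such that $x_n\notin\{x_{n+1}^p:p\ge 2\}$.
   Context: $\mathsf{T_{z}S}$ is the class of Hausdorff zero-dimensional topological semigroups; a semigroup $X$ is $\mathsf{T_{z}S}$-closed if for every isomorphic topological embedding of $X$ (discrete topology) into some $Y\in\mathsf{T_{z}S}$ the image is closed in $Y$. $E(X)$: idempotents; $H_e$: maximal subgroup containing $e$; $Z(X)$: center. $\sqrt[\infty]{e}=\{x\in X:\exists n\in\mathbb N\ (x^n=e)\}$. A semigroup is bounded if there is $n\ge1$ with $x^n$ idempotent for all $x$. *)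

theory Defs
  imports "HOL-Analysis.Analysis"
begin

text \<open>Powers x^n (n \<ge> 1) in a semigroup: spow x n = x^n for n \<ge> 1 (spow x 0 = x is a dummy value).\<close>
fun spow :: "'a::semigroup_mult \<Rightarrow> nat \<Rightarrow> 'a" where
  "spow x 0 = x"
| "spow x (Suc 0) = x"
| "spow x (Suc (Suc n)) = spow x (Suc n) * x"

definition idempotents :: "'a::semigroup_mult set" where
  "idempotents = {e. e * e = e}"

definition maxsubgroup :: "'a::semigroup_mult \<Rightarrow> 'a set" where
  "maxsubgroup e = {x. e * x = x \<and> x * e = x \<and>
      (\<exists>y. e * y = y \<and> y * e = y \<and> x * y = e \<and> y * x = e)}"

definition center :: "'a::semigroup_mult set" where
  "center = {z. \<forall>x. z * x = x * z}"

definition inf_root :: "'a::semigroup_mult \<Rightarrow> 'a set" where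
  "inf_root e = {x. \<exists>n\<ge>1. spow x n = e}"

definition bounded_subsemigroup :: "'a::semigroup_mult set \<Rightarrow> bool" where
  "bounded_subsemigroup S \<longleftrightarrow> (\<exists>n\<ge>1. \<forall>x\<in>S. spow x n * spow x n = spow x n)"

definition TzS :: "'b topology \<Rightarrow> ('b \<Rightarrow> 'b \<Rightarrow> 'b) \<Rightarrow> bool" where
  "TzS T m \<longleftrightarrow>
     (\<forall>a\<in>topspace T. \<forall>b\<in>topspace T. \<forall>c\<in>topspace T. m (m a b) c = m a (m b c)) \<and>
     continuous_map (prod_topology T T) T (\<lambda>(a, b). m a b) \<and>
     Hausdorff_space T \<and> T dim_le 0"

text \<open>The target semigroups are taken on the carrier
  type 'a set set (enough room).\<close>
definition TzS_closed :: "'a::semigroup_mult itself \<Rightarrow> bool" where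
  "TzS_closed _ \<longleftrightarrow>
     (\<forall>(T :: 'a set set topology) m (h :: 'a \<Rightarrow> 'a set set).
        TzS T m \<and> (\<forall>x y. h (x * y) = m (h x) (h y)) \<and>
        embedding_map (discrete_topology UNIV) T h
        \<longrightarrow> closedin T (range h))"

end

theory Submission
  imports Defs
begin

lemma spow_Suc: "n \<ge> 1 \<Longrightarrow> spow a (Suc n) = spow a n * a"
  by (cases n) auto

lemma spow_add_Suc: "i \<ge> 1 \<Longrightarrow> spow a (i + Suc j) = spow a i * spow a (Suc j)"
proof (induction j)
  case 0 then show ?case using spow_Suc[of i a] by simp
next
  case (Suc n)
  have "spow a (i + Suc (Suc n)) = spow a (i + Suc n) * a" using spow_Suc[of "i+Suc n" a] Suc by simp
  also have "\<dots> = spow a i * (spow a (Suc n) * a)" using Suc by (simp add: mult.assoc)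
  also have "\<dots> = spow a i * spow a (Suc (Suc n))" by simp
  finally show ?case .
qed

lemma spow_add: "i \<ge> 1 \<Longrightarrow> j \<ge> 1 \<Longrightarrow> spow a (i + j) = spow a i * spow a j"
  using spow_add_Suc[of i a "j - 1"] by simp

lemma spow_mult_Suc: "i \<ge> 1 \<Longrightarrow> spow (spow a i) (Suc j) = spow a (i * Suc j)"
proof (induction j)
  case 0 then show ?case by simp
next
  case (Suc n)
  have "spow (spow a i) (Suc (Suc n)) = spow (spow a i) (Suc n) * spow a i" by simp
  also have "\<dots> = spow a (i * Suc n + i)" using Suc spow_add[of "i * Suc n" i a] by simp
  finally show ?case by (simp add: add.commute)
qed

lemma spow_mult: "i \<ge> 1 \<Longrightarrow> j \<ge> 1 \<Longrightarrow> spow (spow a i) j = spow a (i * j)"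
  using spow_mult_Suc[of i a "j - 1"] by simp

lemma spow_comm: "b * z = z * b \<Longrightarrow> spow b n * z = z * spow b n"
proof (induction b n rule: spow.induct)
  case (3 x n)
  have "spow x (Suc (Suc n)) * z = spow x (Suc n) * (x * z)" by (simp add: mult.assoc)
  also have "\<dots> = (spow x (Suc n) * z) * x" using 3 by (metis mult.assoc)
  also have "\<dots> = (z * spow x (Suc n)) * x" using 3 by simp
  also have "\<dots> = z * spow x (Suc (Suc n))" by (simp add: mult.assoc)
  finally show ?case .
qed auto

lemma spow_idem: "e * e = e \<Longrightarrow> spow e n = e"
  by (induction e n rule: spow.induct) auto

lemma spow_distrib_Suc: "a * b = b * a \<Longrightarrow> spow (a * b) (Suc n) = spow a (Suc n) * spow b (Suc n)"
proof (induction n)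
  case 0 then show ?case by simp
next
  case (Suc n)
  have c: "spow b (Suc n) * a = a * spow b (Suc n)" using spow_comm[of b a] Suc(2) by metis
  have "spow (a*b) (Suc (Suc n)) = spow (a*b) (Suc n) * (a*b)" by simp
  also have "\<dots> = spow a (Suc n) * (spow b (Suc n) * a) * b" using Suc by (simp add: mult.assoc)
  also have "\<dots> = (spow a (Suc n) * a) * (spow b (Suc n) * b)" using c by (simp add: mult.assoc)
  finally show ?case by simp
qed

lemma spow_distrib: assumes "a * b = b * a" shows "spow (a * b) n = spow a n * spow b n"
proof (cases n)
  case (Suc m) then show ?thesis using spow_distrib_Suc[of a b m] assms by simp
qed simp


fun act :: "'a::semigroup_mult \<Rightarrow> 'a option \<Rightarrow> 'a" where
  "act a None = a" | "act a (Some y) = a * y"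

fun omul :: "'a::semigroup_mult option \<Rightarrow> 'a option \<Rightarrow> 'a option" where
  "omul None z = z" | "omul (Some y) None = Some y" | "omul (Some y) (Some z) = Some (y * z)"

lemma act_act: "act (act a y) z = act a (omul y z)"
  by (cases y; cases z) (auto simp: mult.assoc)

lemma act_mult: "act (a * b) y = a * act b y"
  by (cases y) (auto simp: mult.assoc)

definition rootof :: "'a::semigroup_mult \<Rightarrow> 'a \<Rightarrow> bool" where
  "rootof e c \<longleftrightarrow> (\<exists>K\<ge>1. spow c K = e)"

lemma rootfix:
  assumes "rootof e c" "c * v = v" shows "e * v = v"
proof -
  obtain K where K: "K \<ge> 1" "spow c K = e" using assms(1) by (auto simp: rootof_def)
  have "spow c (Suc n) * v = v" for n
  proof (induction n)
    case (Suc n)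
    have "spow c (Suc (Suc n)) * v = spow c (Suc n) * (c * v)" by (simp add: mult.assoc)
    then show ?case using Suc assms(2) by simp
  qed (use assms in simp)
  from this[of "K - 1"] K show ?thesis by simp
qed

locale germ =
  fixes e :: "'a::semigroup_mult" and u :: "nat \<Rightarrow> 'a" and D :: "nat \<Rightarrow> nat \<Rightarrow> 'a"
  assumes e_idem: "e * e = e"
    and e_cent: "\<And>z. e * z = z * e"
    and u_cent: "\<And>j z. u j * z = z * u j"
    and u_prod: "\<And>j i. u j * u i = e"
    and u_D: "\<And>j i. j < i \<Longrightarrow> u i = D j i * u j"
    and D_e: "\<And>j i. j < i \<Longrightarrow> D j i * e = e"
    and D_root: "\<And>j i. j < i \<Longrightarrow> rootof e (D j i)"
    and u_notH: "\<And>j. u j * e \<noteq> u j"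
    and D_cmp: "\<And>j k j' k'. j < k \<Longrightarrow> j < j' \<Longrightarrow> k < k' \<Longrightarrow>
        \<exists>c. rootof e c \<and> (D k k' = c * D j j' \<or> D j j' = c * D k k')"
begin

definition ev :: "'a option \<Rightarrow> nat \<Rightarrow> 'a" where "ev y j = act (u j) y"
definition cst :: "'a option \<Rightarrow> bool" where "cst y \<longleftrightarrow> (\<exists>c. \<forall>\<^sub>F j in sequentially. ev y j = c)"
definition eqv :: "'a option \<Rightarrow> 'a option \<Rightarrow> bool" where
  "eqv y z \<longleftrightarrow> (\<forall>\<^sub>F j in sequentially. ev y j = ev z j)"
definition cls :: "'a option \<Rightarrow> 'a option set" where "cls y = {z. eqv z y}"
definition lim :: "'a option \<Rightarrow> 'a" where "lim y = (SOME c. \<forall>\<^sub>F j in sequentially. ev y j = c)"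
definition rp :: "'a option set \<Rightarrow> 'a option" where "rp S = (SOME y. y \<in> S)"
definition nrm :: "'a option \<Rightarrow> 'a + 'a option set" where
  "nrm y = (if cst y then Inl (lim y) else Inr (cls y))"
definition Ycar :: "('a + 'a option set) set" where
  "Ycar = range Inl \<union> {Inr (cls y) | y. \<not> cst y}"

fun mul :: "'a + 'a option set \<Rightarrow> 'a + 'a option set \<Rightarrow> 'a + 'a option set" where
  "mul (Inl x) (Inl x') = Inl (x * x')"
| "mul (Inl x) (Inr S) = nrm (omul (Some x) (rp S))"
| "mul (Inr S) (Inl x) = nrm (omul (rp S) (Some x))"
| "mul (Inr S) (Inr S') = Inl (act e (omul (rp S) (rp S')))"

fun sem :: "'a + 'a option set \<Rightarrow> nat \<Rightarrow> 'a" where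
  "sem (Inl x) j = x" | "sem (Inr S) j = ev (rp S) j"

lemma ev_D: "j < i \<Longrightarrow> ev y i = D j i * ev y j"
  using u_D by (simp add: ev_def act_mult)

lemma cstI:
  assumes "e * ev y a = ev y a" shows "cst y"
proof -
  have "ev y l = ev y a" if "l \<ge> a" for l
  proof (cases "l = a")
    case False
    then have "a < l" using that by simp
    then have "ev y l = D a l * (e * ev y a)" using ev_D assms by simp
    also have "\<dots> = (D a l * e) * ev y a" by (simp add: mult.assoc)
    also have "\<dots> = ev y a" using D_e \<open>a < l\<close> assms by simp
    finally show ?thesis .
  qed simp
  then show ?thesis unfolding cst_def eventually_sequentially by blast
qed

lemma rep_cst: "a < b \<Longrightarrow> ev y a = ev y b \<Longrightarrow> cst y"
  using ev_D[of a b y] D_root[of a b] rootfix cstI by metis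

lemma ncst_tail: assumes "\<not> cst y" shows "\<exists>J. \<forall>j\<ge>J. ev y j \<noteq> x"
proof (cases "\<exists>a. ev y a = x")
  case True
  then obtain a where a: "ev y a = x" by blast
  have "ev y j \<noteq> x" if "j \<ge> Suc a" for j
    using rep_cst[of a j y] a assms that by auto
  then show ?thesis by blast
qed auto

lemma ncst_ev: "\<not> cst y \<Longrightarrow> \<forall>\<^sub>F j in sequentially. ev y j \<noteq> x"
  using ncst_tail unfolding eventually_sequentially by blast

lemma ncst_finite: assumes "\<not> cst y" shows "finite {j. ev y j = x}"
proof -
  obtain J where "\<forall>j\<ge>J. ev y j \<noteq> x" using ncst_tail assms by blast
  then have "{j. ev y j = x} \<subseteq> {..<J}" by (metis (mono_tags) lessThan_iff mem_Collect_eq not_le subsetI)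
  then show ?thesis using finite_subset by blast
qed

lemma ev_mul_left: "ev (omul (Some x) y) j = x * ev y j"
proof -
  have "ev (omul (Some x) y) j = act (act (u j) (Some x)) y" by (simp only: ev_def act_act)
  also have "\<dots> = act (x * u j) y" using u_cent by simp
  also have "\<dots> = x * ev y j" by (simp add: act_mult ev_def)
  finally show ?thesis .
qed

lemma ev_mul_right: "ev (omul y (Some x)) j = ev y j * x"
  by (simp add: ev_def flip: act_act)

lemma ev_pair: "ev y j * ev z k = act e (omul y z)"
proof -
  have "act (u j) y * act (u k) z = act (u j * u k) (omul y z)"
  proof (cases y; cases z)
    fix a assume "y = Some a" "z = None"
    then show ?thesis using u_cent[of k a] by (simp add: mult.assoc)
  next
    fix a b assume "y = Some a" "z = Some b"
    then show ?thesis using u_cent[of k a] by (simp add: mult.assoc) (metis mult.assoc)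
  qed (auto simp: mult.assoc)
  then show ?thesis by (simp add: ev_def u_prod)
qed

lemma eqv_refl: "eqv y y" by (simp add: eqv_def)
lemma eqv_sym: "eqv y z \<Longrightarrow> eqv z y" by (simp add: eqv_def eq_commute)
lemma eqv_trans: assumes "eqv y z" "eqv z w" shows "eqv y w"
  using assms unfolding eqv_def by eventually_elim simp

lemma cst_eqv: assumes "eqv y z" "cst y" shows "cst z"
proof -
  obtain c where c: "\<forall>\<^sub>F j in sequentially. ev y j = c" using assms(2) by (auto simp: cst_def)
  have "\<forall>\<^sub>F j in sequentially. ev z j = c" using c assms(1) unfolding eqv_def by eventually_elim simp
  then show ?thesis by (auto simp: cst_def)
qed

lemma cls_eqI: "eqv y z \<Longrightarrow> cls y = cls z"
  unfolding cls_def using eqv_trans eqv_sym by blast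

lemma cls_eqD: "cls y = cls z \<Longrightarrow> eqv y z"
  unfolding cls_def using eqv_refl by blast

lemma rp_cls: "eqv (rp (cls y)) y"
proof -
  have "y \<in> cls y" by (simp add: cls_def eqv_refl)
  then have "rp (cls y) \<in> cls y" unfolding rp_def by (rule someI)
  then show ?thesis by (simp add: cls_def)
qed

lemma lim_cst: "cst y \<Longrightarrow> \<forall>\<^sub>F j in sequentially. ev y j = lim y"
  unfolding cst_def lim_def by (rule someI_ex)

lemma Inr_Ycar: assumes "Inr S \<in> Ycar" shows "\<not> cst (rp S)" "cls (rp S) = S"
proof -
  obtain y where y: "S = cls y" "\<not> cst y" using assms by (auto simp: Ycar_def)
  show "\<not> cst (rp S)" using y rp_cls cst_eqv eqv_sym by metis
  show "cls (rp S) = S" using y rp_cls cls_eqI by metis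
qed

lemma Inr_Ycar_neq: "Inr S \<in> Ycar \<Longrightarrow> Inr S' \<in> Ycar \<Longrightarrow> S \<noteq> S' \<Longrightarrow> \<not> eqv (rp S) (rp S')"
  using Inr_Ycar cls_eqI by metis

lemma nrm_Ycar: "nrm y \<in> Ycar"
  by (auto simp: nrm_def Ycar_def)

lemma mul_Ycar: "mul a b \<in> Ycar"
  by (cases a; cases b) (auto simp: nrm_Ycar, auto simp: Ycar_def)

lemma sem_nrm: "\<forall>\<^sub>F j in sequentially. sem (nrm y) j = ev y j"
proof (cases "cst y")
  case True then show ?thesis using lim_cst[of y] by (simp add: nrm_def eq_commute)
next
  case False then show ?thesis using rp_cls[of y] by (simp add: nrm_def eqv_def)
qed

lemma sem_mul: "\<forall>\<^sub>F j in sequentially. sem (mul a b) j = sem a j * sem b j"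
proof (cases a; cases b)
  fix x S assume "a = Inl x" "b = Inr S"
  then show ?thesis using sem_nrm[of "omul (Some x) (rp S)"] by (simp add: ev_mul_left)
next
  fix x S assume "a = Inr S" "b = Inl x"
  then show ?thesis using sem_nrm[of "omul (rp S) (Some x)"] by (simp add: ev_mul_right)
next
  fix S S' assume "a = Inr S" "b = Inr S'"
  then show ?thesis by (simp add: ev_pair)
qed auto

lemma sem_inj:
  assumes "a \<in> Ycar" "b \<in> Ycar" "\<forall>\<^sub>F j in sequentially. sem a j = sem b j"
  shows "a = b"
proof (cases a; cases b)
  fix x x' assume "a = Inl x" "b = Inl x'"
  then show ?thesis using assms(3) by simp
next
  fix x S assume ab: "a = Inl x" "b = Inr S"
  then have "cst (rp S)" using assms(3) unfolding cst_def by (auto simp: eq_commute)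
  then show ?thesis using Inr_Ycar assms(2) ab by blast
next
  fix x S assume ab: "a = Inr S" "b = Inl x"
  then have "cst (rp S)" using assms(3) unfolding cst_def by auto
  then show ?thesis using Inr_Ycar assms(1) ab by blast
next
  fix S S' assume ab: "a = Inr S" "b = Inr S'"
  then have "eqv (rp S) (rp S')" using assms(3) by (simp add: eqv_def)
  then show ?thesis using Inr_Ycar_neq assms ab by blast
qed

lemma mul_assoc:
  assumes "a \<in> Ycar" "b \<in> Ycar" "c \<in> Ycar"
  shows "mul (mul a b) c = mul a (mul b c)"
proof (rule sem_inj[OF mul_Ycar mul_Ycar])
  show "\<forall>\<^sub>F j in sequentially. sem (mul (mul a b) c) j = sem (mul a (mul b c)) j"
    using sem_mul[of "mul a b" c] sem_mul[of a b] sem_mul[of a "mul b c"] sem_mul[of b c]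
    by eventually_elim (simp add: mult.assoc)
qed

end

context germ begin

lemma two:
  assumes ny: "\<not> cst y" and nz: "\<not> cst z" and neq: "\<not> eqv y z"
    and P1: "ev y j = ev z k" and P2: "ev y j' = ev z k'" and jj: "j < j'" and kk: "k < k'"
  shows False
proof -
  have case1: False if c: "rootof e c" and h: "D k k' = c * D j j'" for c
  proof -
    have "ev z k' = c * (D j j' * ev y j)" using ev_D[OF kk, of z] h P1 by (simp add: mult.assoc)
    also have "\<dots> = c * ev y j'" using ev_D[OF jj, of y] by simp
    finally have "c * ev y j' = ev y j'" using P2 by simp
    then have "e * ev y j' = ev y j'" using rootfix c by blast
    then show False using cstI ny by blast
  qed
  have case2: False if c: "rootof e c" and h: "D j j' = c * D k k'" for c
  proof -
    have "ev y j' = c * (D k k' * ev z k)" using ev_D[OF jj, of y] h P1 by (simp add: mult.assoc)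
    also have "\<dots> = c * ev z k'" using ev_D[OF kk, of z] by simp
    finally have "c * ev z k' = ev z k'" using P2 by simp
    then have "e * ev z k' = ev z k'" using rootfix c by blast
    then show False using cstI nz by blast
  qed
  consider "j = k" | "j < k" | "k < j" by linarith
  then show False
  proof cases
    case 1
    have "ev y l = ev z l" if "l \<ge> j" for l
    proof (cases "l = j")
      case False
      then have "j < l" using that by simp
      then show ?thesis using ev_D[of j l y] ev_D[of j l z] P1 1 by simp
    qed (use P1 1 in simp)
    then have "eqv y z" unfolding eqv_def eventually_sequentially by blast
    then show False using neq by blast
  next
    case 2
    then obtain c where "rootof e c" "D k k' = c * D j j' \<or> D j j' = c * D k k'"
      using D_cmp[OF 2 jj kk] by blast
    then show False using case1 case2 by blast
  next
    case 3
    then obtain c where "rootof e c" "D j j' = c * D k k' \<or> D k k' = c * D j j'"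
      using D_cmp[OF 3 kk jj] by blast
    then show False using case1 case2 by blast
  qed
qed

lemma KEY:
  assumes "\<not> cst y" "\<not> cst z" "\<not> eqv y z"
  shows "\<exists>J. \<forall>j\<ge>J. \<forall>k\<ge>J. ev y j \<noteq> ev z k"
proof (cases "\<exists>j k. ev y j = ev z k")
  case True
  then obtain j0 k0 where P: "ev y j0 = ev z k0" by blast
  have "ev y j \<noteq> ev z k" if "j \<ge> Suc (max j0 k0)" "k \<ge> Suc (max j0 k0)" for j k
  proof -
    have "j0 < j" "k0 < k" using that by auto
    then show ?thesis using two[OF assms P, of j k] by blast
  qed
  then show ?thesis by blast
qed auto

lemma KEY2:
  assumes "\<not> cst y" "\<not> cst z" "\<not> eqv y z"
  shows "\<exists>J. \<forall>k\<ge>J. \<forall>j\<ge>J0. ev y j \<noteq> ev z k"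
proof -
  obtain J1 where J1: "\<forall>j\<ge>J1. \<forall>k\<ge>J1. ev y j \<noteq> ev z k" using KEY[OF assms] by blast
  define bad where "bad = (\<Union>j\<in>{..<J1}. {k. ev z k = ev y j})"
  have "finite bad" unfolding bad_def using ncst_finite[OF assms(2)] by blast
  then obtain B where B: "\<forall>k\<in>bad. k < B" using finite_nat_set_iff_bounded by blast
  have "ev y j \<noteq> ev z k" if "k \<ge> max J1 B" "j \<ge> J0" for j k
  proof (cases "j \<ge> J1")
    case True then show ?thesis using J1 that by auto
  next
    case False
    show ?thesis
    proof
      assume "ev y j = ev z k"
      moreover have "j \<in> {..<J1}" using False by simp
      ultimately have "k \<in> bad" unfolding bad_def by force
      then show False using B that by fastforce
    qed
  qed
  then show ?thesis by blast
qed

definition opn :: "('a + 'a option set) set \<Rightarrow> bool" where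
  "opn U \<longleftrightarrow> U \<subseteq> Ycar \<and> (\<forall>S. Inr S \<in> U \<longrightarrow> (\<forall>\<^sub>F j in sequentially. Inl (ev (rp S) j) \<in> U))"

lemma istop: "istopology opn"
  unfolding istopology_def
proof safe
  fix S T assume "opn S" "opn T"
  then show "opn (S \<inter> T)" unfolding opn_def by (auto intro: eventually_conj)
next
  fix K assume h: "\<forall>K\<in>K. opn K"
  show "opn (\<Union>K)" unfolding opn_def
  proof safe
    fix x X assume "x \<in> X" "X \<in> K" then show "x \<in> Ycar" using h by (auto simp: opn_def)
  next
    fix S X assume "Inr S \<in> X" "X \<in> K"
    then have "\<forall>\<^sub>F j in sequentially. Inl (ev (rp S) j) \<in> X" using h by (auto simp: opn_def)
    then show "\<forall>\<^sub>F j in sequentially. Inl (ev (rp S) j) \<in> \<Union>K"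
      by (rule eventually_mono) (use \<open>X \<in> K\<close> in blast)
  qed
qed

definition Ttop :: "('a + 'a option set) topology" where "Ttop = topology opn"

lemma openin_T: "openin Ttop U \<longleftrightarrow> opn U"
  by (simp add: Ttop_def istop)

lemma opn_Ycar: "opn Ycar"
  by (auto simp: opn_def Ycar_def)

lemma topspace_T: "topspace Ttop = Ycar"
  unfolding topspace_def openin_T using opn_Ycar by (auto simp: opn_def)

definition N :: "'a option set \<Rightarrow> nat \<Rightarrow> ('a + 'a option set) set" where
  "N S J = insert (Inr S) ((\<lambda>j. Inl (ev (rp S) j)) ` {J..})"

lemma opn_N: assumes "Inr S \<in> Ycar" shows "opn (N S J)"
  unfolding opn_def N_def
proof (intro conjI allI impI)
  show "insert (Inr S) ((\<lambda>j. Inl (ev (rp S) j)) ` {J..}) \<subseteq> Ycar" using assms by (auto simp: Ycar_def)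
next
  fix S' assume "Inr S' \<in> insert (Inr S) ((\<lambda>j. Inl (ev (rp S) j)) ` {J..})"
  then have "S' = S" by auto
  then show "\<forall>\<^sub>F j in sequentially. Inl (ev (rp S') j) \<in> insert (Inr S) ((\<lambda>j. Inl (ev (rp S) j)) ` {J..})"
    unfolding eventually_sequentially by auto
qed

lemma opn_Inl: "opn {Inl x}"
  by (auto simp: opn_def Ycar_def)

lemma opn_nrm: assumes "opn W" "nrm y \<in> W" shows "\<forall>\<^sub>F j in sequentially. Inl (ev y j) \<in> W"
proof (cases "cst y")
  case True
  then have "Inl (lim y) \<in> W" using assms by (simp add: nrm_def)
  then show ?thesis using lim_cst[OF True] by (auto elim: eventually_mono)
next
  case False
  then have "Inr (cls y) \<in> W" using assms by (simp add: nrm_def)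
  then have "\<forall>\<^sub>F j in sequentially. Inl (ev (rp (cls y)) j) \<in> W" using assms(1) by (simp add: opn_def)
  then show ?thesis using rp_cls[of y] unfolding eqv_def by eventually_elim simp
qed

lemma nrm_const: assumes "\<And>j. ev y j = c" shows "nrm y = Inl c"
proof -
  have cy: "cst y" using assms by (auto simp: cst_def)
  have "\<forall>\<^sub>F j in sequentially. c = lim y" using lim_cst[OF cy] assms by simp
  then have "c = lim y" by simp
  then show ?thesis using cy by (simp add: nrm_def)
qed

lemma cont_at:
  assumes a: "a \<in> Ycar" and b: "b \<in> Ycar" and W: "opn W" and ab: "mul a b \<in> W"
  shows "\<exists>U V. opn U \<and> opn V \<and> a \<in> U \<and> b \<in> V \<and> (\<forall>a'\<in>U. \<forall>b'\<in>V. mul a' b' \<in> W)"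
proof (cases a; cases b)
  fix x x' assume h: "a = Inl x" "b = Inl x'"
  show ?thesis
    by (rule exI[of _ "{a}"], rule exI[of _ "{b}"]) (use h ab opn_Inl in auto)
next
  fix x S assume h: "a = Inl x" "b = Inr S"
  let ?w = "omul (Some x) (rp S)"
  have "\<forall>\<^sub>F j in sequentially. Inl (ev ?w j) \<in> W" using opn_nrm[OF W] ab h by simp
  then obtain J where J: "\<forall>j\<ge>J. Inl (ev ?w j) \<in> W" by (auto simp: eventually_sequentially)
  have "\<forall>a'\<in>{a}. \<forall>b'\<in>N S J. mul a' b' \<in> W"
    using J ab h by (auto simp: N_def ev_mul_left)
  then show ?thesis using opn_Inl opn_N b h by (metis insertI1 N_def)
next
  fix x S assume h: "a = Inr S" "b = Inl x"
  let ?w = "omul (rp S) (Some x)"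
  have "\<forall>\<^sub>F j in sequentially. Inl (ev ?w j) \<in> W" using opn_nrm[OF W] ab h by simp
  then obtain J where J: "\<forall>j\<ge>J. Inl (ev ?w j) \<in> W" by (auto simp: eventually_sequentially)
  have "\<forall>a'\<in>N S J. \<forall>b'\<in>{b}. mul a' b' \<in> W"
    using J ab h by (auto simp: N_def ev_mul_right)
  then show ?thesis using opn_Inl opn_N a h by (metis insertI1 N_def)
next
  fix S S' assume h: "a = Inr S" "b = Inr S'"
  let ?c = "act e (omul (rp S) (rp S'))"
  have ab': "mul a b = Inl ?c" using h by simp
  have "mul a' b' = Inl ?c" if a'N: "a' \<in> N S 0" and b'N: "b' \<in> N S' 0" for a' b'
  proof -
    consider "a' = Inr S" | j where "a' = Inl (ev (rp S) j)" using a'N unfolding N_def by blast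
    then show ?thesis
    proof cases
      case 1
      consider "b' = Inr S'" | k where "b' = Inl (ev (rp S') k)" using b'N unfolding N_def by blast
      then show ?thesis
      proof cases
        case 2
        have "nrm (omul (rp S) (Some (ev (rp S') k))) = Inl ?c"
          by (rule nrm_const) (simp add: ev_mul_right ev_pair)
        then show ?thesis using 1 2 by simp
      qed (use 1 h in simp)
    next
      case (2 j)
      consider "b' = Inr S'" | k where "b' = Inl (ev (rp S') k)" using b'N unfolding N_def by blast
      then show ?thesis
      proof cases
        case 1
        have "nrm (omul (Some (ev (rp S) j)) (rp S')) = Inl ?c"
          by (rule nrm_const) (simp add: ev_mul_left ev_pair)
        then show ?thesis using 1 2 by simp
      next
        case (2 k)
        then show ?thesis using \<open>a' = Inl (ev (rp S) j)\<close> by (simp add: ev_pair)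
      qed
    qed
  qed
  then have "\<forall>a'\<in>N S 0. \<forall>b'\<in>N S' 0. mul a' b' \<in> W" using ab ab' by auto
  then show ?thesis using opn_N a b h by (metis insertI1 N_def)
qed

lemma cont: "continuous_map (prod_topology Ttop Ttop) Ttop (\<lambda>(a, b). mul a b)"
  unfolding continuous_map_def
proof (intro conjI allI impI)
  show "(\<lambda>(a, b). mul a b) \<in> topspace (prod_topology Ttop Ttop) \<rightarrow> topspace Ttop"
    by (auto simp: topspace_T mul_Ycar)
next
  fix W assume "openin Ttop W"
  then have W: "opn W" by (simp add: openin_T)
  show "openin (prod_topology Ttop Ttop) {x \<in> topspace (prod_topology Ttop Ttop). (case x of (a, b) \<Rightarrow> mul a b) \<in> W}"
    unfolding openin_prod_topology_alt
  proof (intro allI impI)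
    fix a b assume ab: "(a, b) \<in> {x \<in> topspace (prod_topology Ttop Ttop). (case x of (a, b) \<Rightarrow> mul a b) \<in> W}"
    then have "a \<in> Ycar" "b \<in> Ycar" "mul a b \<in> W" by (auto simp: topspace_T)
    then obtain U V where UV: "opn U" "opn V" "a \<in> U" "b \<in> V" "\<forall>a'\<in>U. \<forall>b'\<in>V. mul a' b' \<in> W"
      using cont_at[OF _ _ W] by blast
    then have "U \<subseteq> Ycar" "V \<subseteq> Ycar" by (auto simp: opn_def)
    then have "U \<times> V \<subseteq> {x \<in> topspace (prod_topology Ttop Ttop). (case x of (a, b) \<Rightarrow> mul a b) \<in> W}"
      using UV by (auto simp: topspace_T)
    then show "\<exists>U V. openin Ttop U \<and> openin Ttop V \<and> a \<in> U \<and> b \<in> V \<and>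
        U \<times> V \<subseteq> {x \<in> topspace (prod_topology Ttop Ttop). (case x of (a, b) \<Rightarrow> mul a b) \<in> W}"
      using UV by (auto simp: openin_T)
  qed
qed

lemma Hausdorff: "Hausdorff_space Ttop"
  unfolding Hausdorff_space_def topspace_T openin_T
proof safe
  fix a b assume a: "a \<in> Ycar" and b: "b \<in> Ycar" and ne: "a \<noteq> b"
  show "\<exists>U V. opn U \<and> opn V \<and> a \<in> U \<and> b \<in> V \<and> disjnt U V"
  proof (cases a; cases b)
    fix x x' assume h: "a = Inl x" "b = Inl x'"
    show ?thesis by (rule exI[of _ "{a}"], rule exI[of _ "{b}"]) (use h ne opn_Inl in auto)
  next
    fix x S assume h: "a = Inl x" "b = Inr S"
    obtain J where J: "\<forall>j\<ge>J. ev (rp S) j \<noteq> x" using ncst_tail Inr_Ycar(1) b h by blast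
    have "disjnt {a} (N S J)" using J h by (auto simp: N_def disjnt_def)
    then show ?thesis using opn_Inl opn_N b h by (metis insertI1 singletonI N_def)
  next
    fix x S assume h: "a = Inr S" "b = Inl x"
    obtain J where J: "\<forall>j\<ge>J. ev (rp S) j \<noteq> x" using ncst_tail Inr_Ycar(1) a h by blast
    have "disjnt (N S J) {b}" using J h by (auto simp: N_def disjnt_def)
    then show ?thesis using opn_Inl opn_N a h by (metis insertI1 singletonI N_def)
  next
    fix S S' assume h: "a = Inr S" "b = Inr S'"
    have "\<not> eqv (rp S) (rp S')" using Inr_Ycar_neq a b h ne by blast
    then obtain J where J: "\<forall>j\<ge>J. \<forall>k\<ge>J. ev (rp S) j \<noteq> ev (rp S') k"
      using KEY Inr_Ycar(1) a b h by blast
    have "disjnt (N S J) (N S' J)" using J h ne by (auto simp: N_def disjnt_def)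
    then show ?thesis using opn_N a b h by (metis insertI1 N_def)
  qed
qed

lemma closed_iff: "closedin Ttop V \<longleftrightarrow> V \<subseteq> Ycar \<and> opn (Ycar - V)"
  by (simp add: closedin_def topspace_T openin_T)

lemma base:
  assumes W: "opn W" and aW: "a \<in> W"
  shows "\<exists>U V. opn U \<and> (V \<subseteq> Ycar \<and> opn (Ycar - V)) \<and> opn V \<and> a \<in> U \<and> U \<subseteq> V \<and> V \<subseteq> W"
proof -
  have "W \<subseteq> Ycar" using W by (simp add: opn_def)
  then have a: "a \<in> Ycar" using aW by blast
  show ?thesis
  proof (cases a)
    case (Inl x)
    have o1: "opn (Ycar - {a})" unfolding opn_def
    proof (intro conjI allI impI)
      fix S assume "Inr S \<in> Ycar - {a}"
      then have nc: "\<not> cst (rp S)" using Inr_Ycar(1) by blast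
      show "\<forall>\<^sub>F j in sequentially. Inl (ev (rp S) j) \<in> Ycar - {a}"
        using ncst_ev[OF nc, of x] by (rule eventually_mono) (simp add: Ycar_def Inl)
    qed blast
    have o2: "opn {a}" using opn_Inl Inl by simp
    have o3: "{a} \<subseteq> Ycar" using a by simp
    show ?thesis
      by (rule exI[of _ "{a}"], rule exI[of _ "{a}"]) (simp add: o1 o2 a aW)
  next
    case (Inr S)
    have "\<forall>\<^sub>F j in sequentially. Inl (ev (rp S) j) \<in> W" using W aW Inr unfolding opn_def by blast
    then obtain J where J: "\<forall>j\<ge>J. Inl (ev (rp S) j) \<in> W" unfolding eventually_sequentially by blast
    have NW: "N S J \<subseteq> W" using J aW Inr unfolding N_def by auto
    have oN: "opn (N S J)" using opn_N a Inr by simp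
    then have NY: "N S J \<subseteq> Ycar" unfolding opn_def by blast
    have oC: "opn (Ycar - N S J)" unfolding opn_def
    proof (intro conjI allI impI)
      fix S' assume "Inr S' \<in> Ycar - N S J"
      then have S': "Inr S' \<in> Ycar" "Inr S' \<notin> N S J" by auto
      then have ne: "S' \<noteq> S" unfolding N_def by auto
      have "\<not> eqv (rp S) (rp S')" using Inr_Ycar_neq a Inr S' ne by metis
      then obtain J' where J': "\<forall>k\<ge>J'. \<forall>j\<ge>J. ev (rp S) j \<noteq> ev (rp S') k"
        using KEY2 Inr_Ycar(1) a Inr S' by blast
      show "\<forall>\<^sub>F j in sequentially. Inl (ev (rp S') j) \<in> Ycar - N S J"
        unfolding eventually_sequentially
      proof (intro exI allI impI)
        fix n assume n: "J' \<le> n"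
        have "Inl (ev (rp S') n) \<notin> N S J"
        proof
          assume "Inl (ev (rp S') n) \<in> N S J"
          then obtain j where "j \<ge> J" "ev (rp S') n = ev (rp S) j" unfolding N_def by auto
          then show False using J' n by metis
        qed
        then show "Inl (ev (rp S') n) \<in> Ycar - N S J" by (simp add: Ycar_def)
      qed
    qed blast
    have aN: "a \<in> N S J" using Inr by (simp add: N_def)
    show ?thesis
      by (rule exI[of _ "N S J"], rule exI[of _ "N S J"]) (simp add: oN oC NY NW aN a)
  qed
qed

lemma dim0: "Ttop dim_le 0"
  unfolding dimension_le_0_neighbourhood_base_of_clopen neighbourhood_base_of
proof (intro allI impI)
  fix W a assume h: "openin Ttop W \<and> a \<in> W"
  obtain U V where UV: "opn U" "V \<subseteq> Ycar \<and> opn (Ycar - V)" "opn V" "a \<in> U" "U \<subseteq> V" "V \<subseteq> W"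
    using base[of W a] h unfolding openin_T by blast
  show "\<exists>U V. openin Ttop U \<and> (closedin Ttop V \<and> openin Ttop V) \<and> a \<in> U \<and> U \<subseteq> V \<and> V \<subseteq> W"
    by (rule exI[of _ U], rule exI[of _ V]) (simp only: openin_T closed_iff UV simp_thms)
qed

lemma Inl_embedding: "embedding_map (discrete_topology UNIV) Ttop Inl"
proof -
  have sub: "subtopology Ttop (range Inl) = discrete_topology (range Inl)"
    unfolding eq_commute[of _ "discrete_topology (range Inl)"] discrete_topology_unique
  proof safe
    show "x \<in> topspace (subtopology Ttop (range Inl)) \<Longrightarrow> x \<in> range Inl" for x by simp
    show "Inl x \<in> topspace (subtopology Ttop (range Inl))" for x by (simp add: topspace_T Ycar_def)
    show "openin (subtopology Ttop (range Inl)) {Inl x}" for x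
      unfolding openin_subtopology using opn_Inl openin_T by blast
  qed
  show ?thesis unfolding embedding_map_def
    by (auto simp: sub homeomorphic_eq_everything_map open_map_def closed_map_def inj_on_def)
qed

lemma cst_None: "\<not> cst None"
proof
  assume "cst None"
  then obtain c J where "\<forall>j\<ge>J. ev None j = c" by (auto simp: cst_def eventually_sequentially)
  then have "u (Suc J) = u J" by (simp add: ev_def)
  then have "D J (Suc J) * u J = u J" using u_D[of J "Suc J"] by simp
  then have "e * u J = u J" using rootfix D_root[of J "Suc J"] by simp
  then show False using u_notH e_cent by metis
qed

lemma not_closed: "\<not> closedin Ttop (range Inl)"
proof
  assume "closedin Ttop (range Inl)"
  then have o: "opn (Ycar - range Inl)" by (simp add: closed_iff)
  have "Inr (cls None) \<in> Ycar - range Inl" using cst_None by (auto simp: Ycar_def)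
  then have "\<forall>\<^sub>F j in sequentially. Inl (ev (rp (cls None)) j) \<in> Ycar - range Inl"
    using o unfolding opn_def by blast
  then show False by simp
qed

lemma Y_exists:
  "\<exists>(T :: ('a + 'a option set) topology) m. TzS T m \<and> (\<forall>x y. Inl (x * y) = m (Inl x) (Inl y)) \<and>
      embedding_map (discrete_topology UNIV) T Inl \<and> \<not> closedin T (range Inl)"
proof (intro exI conjI)
  show "TzS Ttop mul" unfolding TzS_def
    using cont Hausdorff dim0 mul_assoc by (simp add: topspace_T)
qed (auto simp: Inl_embedding not_closed)

end

definition imgtop :: "('c \<Rightarrow> 'd) \<Rightarrow> 'c topology \<Rightarrow> 'd topology" where
  "imgtop f T = topology (\<lambda>U. U \<subseteq> f ` topspace T \<and> openin T (f -` U \<inter> topspace T))"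

lemma istop_img: "istopology (\<lambda>U. U \<subseteq> f ` topspace T \<and> openin T (f -` U \<inter> topspace T))"
  unfolding istopology_def
proof (intro conjI allI impI)
  fix S U assume SU: "S \<subseteq> f ` topspace T \<and> openin T (f -` S \<inter> topspace T)"
    "U \<subseteq> f ` topspace T \<and> openin T (f -` U \<inter> topspace T)"
  show "S \<inter> U \<subseteq> f ` topspace T" using SU by blast
  have eq: "f -` (S \<inter> U) \<inter> topspace T = (f -` S \<inter> topspace T) \<inter> (f -` U \<inter> topspace T)" by auto
  show "openin T (f -` (S \<inter> U) \<inter> topspace T)" unfolding eq by (rule openin_Int) (use SU in blast)+
next
  fix K assume h: "\<forall>K\<in>K. K \<subseteq> f ` topspace T \<and> openin T (f -` K \<inter> topspace T)"
  show "\<Union>K \<subseteq> f ` topspace T" using h by blast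
next
  fix K assume h: "\<forall>K\<in>K. K \<subseteq> f ` topspace T \<and> openin T (f -` K \<inter> topspace T)"
  have eq: "f -` \<Union>K \<inter> topspace T = \<Union>((\<lambda>K. f -` K \<inter> topspace T) ` K)" by auto
  show "openin T (f -` \<Union>K \<inter> topspace T)" unfolding eq
    by (rule openin_Union) (use h in blast)
qed

lemma openin_img: "openin (imgtop f T) U \<longleftrightarrow> U \<subseteq> f ` topspace T \<and> openin T (f -` U \<inter> topspace T)"
  by (simp add: imgtop_def istop_img)

lemma topspace_img: "topspace (imgtop f T) = f ` topspace T"
proof -
  have "f -` f ` topspace T \<inter> topspace T = topspace T" by auto
  then have "openin (imgtop f T) (f ` topspace T)" by (simp add: openin_img)
  then show ?thesis using openin_subset by (auto simp: openin_img topspace_def)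
qed

lemma homeo_img:
  assumes "inj f"
  shows "homeomorphic_maps T (imgtop f T) f (inv f)"
  unfolding homeomorphic_maps_def
proof (intro conjI)
  show "continuous_map T (imgtop f T) f"
    unfolding continuous_map_def
  proof (intro conjI allI impI)
    show "f \<in> topspace T \<rightarrow> topspace (imgtop f T)" by (auto simp: topspace_img)
    fix U assume "openin (imgtop f T) U"
    then show "openin T {x \<in> topspace T. f x \<in> U}" by (simp add: openin_img Int_def conj_commute)
  qed
  show "continuous_map (imgtop f T) T (inv f)"
    unfolding continuous_map_def
  proof (intro conjI allI impI)
    show "inv f \<in> topspace (imgtop f T) \<rightarrow> topspace T" using assms by (auto simp: topspace_img)
    fix V assume V: "openin T V"
    then have Vs: "V \<subseteq> topspace T" by (rule openin_subset)
    have eq: "{x \<in> topspace (imgtop f T). inv f x \<in> V} = f ` V"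
      using assms Vs by (auto simp: topspace_img)
    have "f -` (f ` V) \<inter> topspace T = V" using assms Vs by (auto simp: inj_vimage_image_eq)
    then show "openin (imgtop f T) {x \<in> topspace (imgtop f T). inv f x \<in> V}"
      unfolding eq openin_img using V Vs by auto
  qed
qed (use assms in \<open>auto simp: topspace_img\<close>)

lemma transfer:
  fixes T :: "'c topology" and m :: "'c \<Rightarrow> 'c \<Rightarrow> 'c" and h :: "'a::semigroup_mult \<Rightarrow> 'c" and f :: "'c \<Rightarrow> 'd"
  assumes TzS: "TzS T m" and hom: "\<forall>x y. h (x*y) = m (h x) (h y)"
    and emb: "embedding_map (discrete_topology UNIV) T h" and nc: "\<not> closedin T (range h)"
    and inj: "inj f"
  shows "\<exists>(T'::'d topology) m' (h'::'a \<Rightarrow> 'd). TzS T' m' \<and> (\<forall>x y. h' (x*y) = m' (h' x) (h' y)) \<and>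
    embedding_map (discrete_topology UNIV) T' h' \<and> \<not> closedin T' (range h')"
proof -
  let ?g = "inv f"
  let ?T = "imgtop f T"
  let ?m = "\<lambda>a b. f (m (?g a) (?g b))"
  have hm: "homeomorphic_maps T ?T f ?g" using homeo_img[OF inj] .
  have hmap: "homeomorphic_map T ?T f" unfolding homeomorphic_map_maps by (rule exI[where x="inv f"]) (rule hm)
  have gf: "?g (f z) = z" for z by (rule inv_f_f[OF inj])
  have cm: "continuous_map (prod_topology T T) T (\<lambda>(a, b). m a b)" using TzS unfolding TzS_def by blast
  have mt: "m a b \<in> topspace T" if "a \<in> topspace T" "b \<in> topspace T" for a b
  proof -
    have "(\<lambda>(a, b). m a b) \<in> topspace (prod_topology T T) \<rightarrow> topspace T" using cm unfolding continuous_map_def by blast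
    from Pi_mem[OF this, of "(a, b)"] show ?thesis using that by simp
  qed
  have cg: "continuous_map ?T T ?g" using hm unfolding homeomorphic_maps_def by blast
  have cf: "continuous_map T ?T f" using hm unfolding homeomorphic_maps_def by blast
  have sp: "T homeomorphic_space ?T" unfolding homeomorphic_space_def by (rule exI[where x=f], rule exI[where x="inv f"]) (rule hm)
  have F1: "TzS ?T ?m" unfolding TzS_def
  proof (intro conjI)
    show "\<forall>a\<in>topspace ?T. \<forall>b\<in>topspace ?T. \<forall>c\<in>topspace ?T. ?m (?m a b) c = ?m a (?m b c)"
    proof (intro ballI)
      fix a b c assume "a \<in> topspace ?T" "b \<in> topspace ?T" "c \<in> topspace ?T"
      then obtain a0 b0 c0 where abc: "a = f a0" "b = f b0" "c = f c0" "a0 \<in> topspace T" "b0 \<in> topspace T" "c0 \<in> topspace T"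
        unfolding topspace_img by blast
      have as: "m (m a0 b0) c0 = m a0 (m b0 c0)" using TzS abc unfolding TzS_def by blast
      show "?m (?m a b) c = ?m a (?m b c)" by (simp only: abc gf as)
    qed
    have A: "continuous_map (prod_topology ?T ?T) T (?g \<circ> fst)"
      by (rule continuous_map_compose[OF continuous_map_fst cg])
    have B: "continuous_map (prod_topology ?T ?T) T (?g \<circ> snd)"
      by (rule continuous_map_compose[OF continuous_map_snd cg])
    have c1: "continuous_map (prod_topology ?T ?T) (prod_topology T T) (\<lambda>p. ((?g \<circ> fst) p, (?g \<circ> snd) p))"
      by (rule continuous_map_pairedI[OF A B])
    have "continuous_map (prod_topology ?T ?T) ?T ((f \<circ> (\<lambda>(a, b). m a b)) \<circ> (\<lambda>p. ((?g \<circ> fst) p, (?g \<circ> snd) p)))"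
      by (rule continuous_map_compose[OF c1 continuous_map_compose[OF cm cf]])
    moreover have "(f \<circ> (\<lambda>(a, b). m a b)) \<circ> (\<lambda>p. ((?g \<circ> fst) p, (?g \<circ> snd) p)) = (\<lambda>(a, b). ?m a b)"
      by (rule ext) (simp add: split_beta)
    ultimately show "continuous_map (prod_topology ?T ?T) ?T (\<lambda>(a, b). ?m a b)" by simp
    have "Hausdorff_space T" using TzS unfolding TzS_def by blast
    then show "Hausdorff_space ?T" by (rule homeomorphic_Hausdorff_space[OF sp, THEN iffD1])
    have "T dim_le 0" using TzS unfolding TzS_def by blast
    then show "?T dim_le 0" by (rule homeomorphic_space_dimension_le[OF sp, THEN iffD1])
  qed
  have F2: "\<forall>x y. (f \<circ> h) (x*y) = ?m ((f \<circ> h) x) ((f \<circ> h) y)"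
  proof (intro allI)
    fix x y
    have "(f \<circ> h) (x*y) = f (m (h x) (h y))" using hom by simp
    also have "\<dots> = ?m ((f \<circ> h) x) ((f \<circ> h) y)" by (simp only: o_def gf)
    finally show "(f \<circ> h) (x*y) = ?m ((f \<circ> h) x) ((f \<circ> h) y)" .
  qed
  have F3: "embedding_map (discrete_topology UNIV) ?T (f \<circ> h)"
  proof (rule embedding_map_compose[OF emb])
    have "subtopology ?T (f ` topspace T) = ?T"
      using subtopology_topspace[of ?T] by (simp only: topspace_img)
    then show "embedding_map T ?T f" unfolding embedding_map_def using hmap by simp
  qed
  have rsub: "range h \<subseteq> topspace T"
  proof -
    have "h ` topspace (discrete_topology UNIV) = topspace (subtopology T (h ` topspace (discrete_topology UNIV)))"
      using emb unfolding embedding_map_def by (rule homeomorphic_imp_surjective_map)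
    then have "range h = topspace T \<inter> range h" by (simp only: topspace_subtopology topspace_discrete_topology)
    then show ?thesis by blast
  qed
  have ceq: "closedin ?T (f ` range h) \<longleftrightarrow> closedin T (range h)"
    by (rule homeomorphic_map_closedness[OF hmap rsub])
  have F4: "\<not> closedin ?T (range (f \<circ> h))"
    unfolding image_comp[symmetric] ceq by (rule nc)
  show ?thesis
    using F1 F2 F3 F4 by blast
qed


lemma inH:
  fixes z e :: "'a::semigroup_mult"
  assumes ee: "e * e = e" and zc: "\<And>w. z * w = w * z" and K: "K \<ge> 1" "spow z K = e" and ze: "z * e = z"
  shows "z \<in> maxsubgroup e"
proof -
  have ec: "e * w = w * e" for w using spow_comm[of z w K] zc K by simp
  define s where "s = spow z (2*K - 1)"
  have s2: "z * s = e"
  proof -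
    have "z * s = spow z (1 + (2*K - 1))" using spow_add[of 1 "2*K-1" z] K by (simp add: s_def)
    also have "\<dots> = spow z (K * 2)" using K by (simp add: mult.commute)
    also have "\<dots> = spow (spow z K) 2" using spow_mult[of K 2 z] K by simp
    also have "\<dots> = e" using K ee by (simp add: numeral_2_eq_2)
    finally show ?thesis .
  qed
  have s2': "s * z = e" using s2 zc by metis
  define y where "y = s * e"
  have "e * z = z" using ec ze by metis
  moreover have "e * y = y" unfolding y_def using ec[of s] ee by (metis mult.assoc)
  moreover have "y * e = y" unfolding y_def using ee by (simp add: mult.assoc)
  moreover have "z * y = e" unfolding y_def using s2 ee by (metis mult.assoc)
  moreover have "y * z = e" unfolding y_def using s2' ec[of z] ze by (metis mult.assoc)
  ultimately show ?thesis using ze unfolding maxsubgroup_def by blast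
qed

lemma pow_up:
  fixes a e :: "'a::semigroup_mult"
  assumes ec: "\<And>w. e * w = w * e" and "i \<ge> 1" "i \<le> j" "spow a i * e = spow a i"
  shows "spow a j * e = spow a j"
proof (cases "i = j")
  case False
  then have j: "j = i + (j - i)" "j - i \<ge> 1" using assms by auto
  have "spow a j * e = spow a i * (spow a (j - i) * e)" using spow_add[OF assms(2) j(2)] j(1)
    by (metis mult.assoc)
  also have "\<dots> = (spow a i * e) * spow a (j - i)" using ec by (metis mult.assoc)
  also have "\<dots> = spow a j" using assms(4) spow_add[OF assms(2) j(2)] j(1) by metis
  finally show ?thesis .
qed (use assms in simp)

locale nt =
  fixes e :: "'a::semigroup_mult" and x :: "nat \<Rightarrow> 'a" and N :: nat
  assumes e_idem: "e * e = e"
    and x_cent: "\<And>n z. x n * z = z * x n"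
    and x_root: "\<And>n. \<exists>K\<ge>1. spow (x n) K = e"
    and x_notfix: "\<And>n. x n * e \<noteq> x n"
    and N_pos: "N \<ge> 1"
    and N_kill: "\<And>n t. t \<ge> 1 \<Longrightarrow> spow (x n) (N * t) * e = e"
    and step: "\<And>n. \<exists>p\<ge>2. x n = spow (x (Suc n)) p"
begin

lemma e_cent: "e * z = z * e"
proof -
  obtain K where "K \<ge> 1" "spow (x 0) K = e" using x_root by blast
  then show ?thesis using spow_comm[of "x 0" z K] x_cent by simp
qed

definition p :: "nat \<Rightarrow> nat" where "p n = (SOME p. p \<ge> 2 \<and> x n = spow (x (Suc n)) p)"

lemma p: "p n \<ge> 2" "x n = spow (x (Suc n)) (p n)"
  using someI_ex[OF step[of n]] by (auto simp: p_def)

definition Q :: "nat \<Rightarrow> nat \<Rightarrow> nat" where "Q a b = prod p {a..<b}"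

lemma Q_pos: "Q a b \<ge> 1"
proof -
  have "\<And>n. 1 \<le> p n" using p(1) by (metis one_le_numeral order_trans)
  then show ?thesis unfolding Q_def by (intro prod_ge_1) simp
qed

lemma Q_split: "a \<le> b \<Longrightarrow> b \<le> c \<Longrightarrow> Q a c = Q a b * Q b c"
  unfolding Q_def by (simp add: prod.atLeastLessThan_concat)

lemma Q_refl[simp]: "Q a a = 1" by (simp add: Q_def)

lemma Q_Suc: "a \<le> b \<Longrightarrow> Q a (Suc b) = Q a b * p b"
  unfolding Q_def by (simp add: prod.atLeastLessThan_Suc)

lemma Q_lt: assumes "a < b" shows "Q a b \<ge> 2 * Q (Suc a) b"
proof -
  have "Q a b = Q a (Suc a) * Q (Suc a) b" using assms by (intro Q_split) auto
  also have "Q a (Suc a) = p a" using Q_Suc[of a a] by simp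
  finally show ?thesis using p(1)[of a] by simp
qed

lemma Q_mono: assumes "a \<le> b" "b \<le> L" shows "Q b L \<le> Q a L"
proof -
  have eq: "Q a L = Q a b * Q b L" using assms by (intro Q_split) auto
  have "1 * Q b L \<le> Q a b * Q b L" by (rule mult_le_mono1[OF Q_pos])
  then show ?thesis unfolding eq by simp
qed

lemma Q_pow: "Q 0 m \<ge> 2 ^ m"
proof (induction m)
  case (Suc m)
  have "Q 0 (Suc m) = Q 0 m * p m" using Q_Suc by simp
  then show ?case using mult_le_mono[OF Suc.IH p(1)[of m]] by (simp add: mult.commute)
qed simp

lemma x_lev: "a \<le> b \<Longrightarrow> x a = spow (x b) (Q a b)"
proof (induction b rule: dec_induct)
  case (step n)
  have "x a = spow (spow (x (Suc n)) (p n)) (Q a n)" using step p(2)[of n] by simp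
  also have "\<dots> = spow (x (Suc n)) (p n * Q a n)" using spow_mult[of "p n" "Q a n" "x (Suc n)"] p(1)[of n] Q_pos[of a n] by simp
  finally show ?case using Q_Suc[OF step(1)] by (simp add: mult.commute)
qed simp

lemma pow_lev: "a \<le> b \<Longrightarrow> i \<ge> 1 \<Longrightarrow> spow (x a) i = spow (x b) (Q a b * i)"
  using x_lev spow_mult Q_pos by metis

lemma root_pow: "i \<ge> 1 \<Longrightarrow> rootof e (spow (x n) i)"
proof -
  assume i: "i \<ge> 1"
  obtain K where K: "K \<ge> 1" "spow (x n) K = e" using x_root by blast
  have "spow (spow (x n) i) K = spow (x n) (K * i)" using spow_mult[of i K "x n"] i K by (simp add: mult.commute)
  also have "\<dots> = spow (spow (x n) K) i" using spow_mult[of K i "x n"] i K by simp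
  also have "\<dots> = e" using K spow_idem e_idem by simp
  finally show ?thesis using K unfolding rootof_def by blast
qed

definition m :: nat where "m = 4 * N"

lemma Qm: "Q 0 m \<ge> 4 * N"
proof -
  have "4 * N < 2 ^ (4 * N)" by (rule less_exp)
  then show ?thesis using Q_pow[of m] unfolding m_def by linarith
qed

definition M :: nat where "M = (LEAST i. 1 \<le> i \<and> spow (x m) i * e = spow (x m) i)"

lemma M_ex: "\<exists>i. 1 \<le> i \<and> spow (x m) i * e = spow (x m) i"
proof -
  obtain K where "K \<ge> 1" "spow (x m) K = e" using x_root by blast
  then show ?thesis using e_idem by auto
qed

lemma M1: "1 \<le> M" and Mfix: "spow (x m) M * e = spow (x m) M"
  using LeastI_ex[OF M_ex] unfolding M_def by auto

lemma Mmin: "1 \<le> i \<Longrightarrow> i < M \<Longrightarrow> spow (x m) i * e \<noteq> spow (x m) i"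
  using not_less_Least unfolding M_def by blast

lemma M_big: "M > 4 * N"
proof -
  have "M > Q 0 m"
  proof (rule ccontr)
    assume "\<not> M > Q 0 m"
    then have "spow (x m) (Q 0 m) * e = spow (x m) (Q 0 m)"
      using pow_up[OF _ M1 _ Mfix] e_cent by simp
    then show False using x_lev[of 0 m] x_notfix[of 0] by simp
  qed
  then show ?thesis using Qm by simp
qed

definition q :: nat where "q = (M - 1) div N"
definition c :: nat where "c = N * q"

lemma c_facts: "c \<le> M - 1" "M \<le> 2 * (c - N)" "N < c"
proof -
  have a: "N * q + (M - 1) mod N = M - 1" unfolding q_def by (metis mult_div_mod_eq)
  have b: "(M - 1) mod N < N" using N_pos by simp
  have c1: "c \<le> M - 1" "M \<le> c + N" using a b unfolding c_def by linarith+
  then show "c \<le> M - 1" by simp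
  show "M \<le> 2 * (c - N)" using c1 M_big by linarith
  show "N < c" using c1 M_big by linarith
qed

definition u :: "nat \<Rightarrow> 'a" where "u j = spow (x (m + j)) (c * Q m (m + j) - N)"
definition D :: "nat \<Rightarrow> nat \<Rightarrow> 'a" where "D j i = spow (x (m + i)) (N * (Q (m + j) (m + i) - 1))"

lemma u_lev:
  assumes "m + j \<le> L"
  shows "u j = spow (x L) (c * Q m L - N * Q (m + j) L)" "c * Q m L - N * Q (m + j) L \<ge> 1"
    "N * Q (m + j) L \<le> N * Q m L"
proof -
  let ?A = "Q m (m + j)" and ?B = "Q (m + j) L"
  have AB: "Q m L = ?A * ?B" using assms by (intro Q_split) auto
  have "c \<le> c * ?A" using Q_pos[of m "m+j"] by simp
  then have E1: "c * ?A - N \<ge> 1" using c_facts(3) by linarith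
  have "u j = spow (x L) (?B * (c * ?A - N))" unfolding u_def using pow_lev[OF assms E1] .
  also have "?B * (c * ?A - N) = c * Q m L - N * ?B" unfolding AB by (simp add: diff_mult_distrib2 mult_ac)
  finally show "u j = spow (x L) (c * Q m L - N * Q (m + j) L)" .
  have "?B * (c * ?A - N) \<ge> 1" using E1 Q_pos[of "m+j" L] by (simp add: Suc_le_eq)
  then show "c * Q m L - N * Q (m + j) L \<ge> 1" using \<open>?B * (c * ?A - N) = c * Q m L - N * ?B\<close> by simp
  show "N * Q (m + j) L \<le> N * Q m L" using Q_mono[of m "m+j" L] assms by simp
qed

lemma D_lev:
  assumes "j < i" "m + i \<le> L"
  shows "D j i = spow (x L) (N * (Q (m + j) L - Q (m + i) L))"
proof -
  let ?A = "Q (m + j) (m + i)" and ?B = "Q (m + i) L"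
  have AB: "Q (m + j) L = ?A * ?B" using assms by (intro Q_split) auto
  have A2: "?A \<ge> 2" using Q_lt[of "m+j" "m+i"] Q_pos[of "Suc (m+j)" "m+i"] assms by linarith
  have E1: "N * (?A - 1) \<ge> 1" using N_pos A2 by (simp add: Suc_le_eq)
  have "D j i = spow (x L) (?B * (N * (?A - 1)))" unfolding D_def using pow_lev[OF assms(2) E1] .
  also have "?B * (N * (?A - 1)) = N * (Q (m + j) L - ?B)" unfolding AB by (simp add: diff_mult_distrib2 mult_ac)
  finally show ?thesis .
qed

lemma u_cent: "u j * z = z * u j"
  unfolding u_def using spow_comm x_cent by blast

lemma fixed_kill: assumes "spow (x L) (N * t) * e = spow (x L) (N * t)" "t \<ge> 1" shows "spow (x L) (N * t) = e"
  using assms N_kill by simp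

lemma u_prod: "u j * u i = e"
proof -
  define L where "L = m + max j i"
  let ?Z = "Q m L"
  have Lj: "m + j \<le> L" and Li: "m + i \<le> L" unfolding L_def by auto
  define E1 where "E1 = c * ?Z - N * Q (m + j) L"
  define E2 where "E2 = c * ?Z - N * Q (m + i) L"
  have uj: "u j = spow (x L) E1" "E1 \<ge> 1" "N * Q (m + j) L \<le> N * ?Z" using u_lev[OF Lj] unfolding E1_def by auto
  have ui: "u i = spow (x L) E2" "E2 \<ge> 1" "N * Q (m + i) L \<le> N * ?Z" using u_lev[OF Li] unfolding E2_def by auto
  have prod: "u j * u i = spow (x L) (E1 + E2)" by (simp only: uj(1) ui(1) spow_add[OF uj(2) ui(2)])
  have cz: "(c - N) * ?Z = c * ?Z - N * ?Z" by (simp add: diff_mult_distrib)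
  have low1: "E1 \<ge> (c - N) * ?Z" unfolding E1_def cz by (rule diff_le_mono2[OF uj(3)])
  have low2: "E2 \<ge> (c - N) * ?Z" unfolding E2_def cz by (rule diff_le_mono2[OF ui(3)])
  have "M * ?Z \<le> 2 * (c - N) * ?Z" using c_facts(2) by simp
  then have big: "M * ?Z \<le> E1 + E2" using low1 low2 by linarith
  have mZ: "M * ?Z \<ge> 1" using M1 Q_pos[of m L] by simp
  have "spow (x m) M = spow (x L) (?Z * M)" using pow_lev[of m L M] Lj M1 by simp
  then have "spow (x L) (M * ?Z) * e = spow (x L) (M * ?Z)" using Mfix by (simp add: mult.commute)
  then have fx: "spow (x L) (E1 + E2) * e = spow (x L) (E1 + E2)"
    using pow_up[OF _ mZ big] e_cent by blast
  define t1 where "t1 = q * ?Z - Q (m + j) L"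
  define t2 where "t2 = q * ?Z - Q (m + i) L"
  have "E1 = N * t1" unfolding E1_def t1_def c_def by (simp add: diff_mult_distrib2 mult_ac)
  moreover have "E2 = N * t2" unfolding E2_def t2_def c_def by (simp add: diff_mult_distrib2 mult_ac)
  ultimately have Et: "E1 + E2 = N * (t1 + t2)" by (simp add: add_mult_distrib2)
  have "t1 + t2 \<ge> 1" using uj(2) \<open>E1 = N * t1\<close> by (cases t1) auto
  then have "spow (x L) (E1 + E2) = e" using fixed_kill fx Et by simp
  then show ?thesis using prod by simp
qed

lemma u_D: "j < i \<Longrightarrow> u i = D j i * u j"
proof -
  assume ji: "j < i"
  define L where "L = m + i"
  have Lj: "m + j \<le> L" and Li: "m + i \<le> L" using ji unfolding L_def by auto
  let ?Z = "Q m L" and ?W = "Q (m + j) L"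
  have ui: "u i = spow (x L) (c * ?Z - N)" using u_lev(1)[OF Li] unfolding L_def by simp
  have uj: "u j = spow (x L) (c * ?Z - N * ?W)" "c * ?Z - N * ?W \<ge> 1" using u_lev[OF Lj] by auto
  have W2: "?W \<ge> 2" using Q_lt[of "m+j" L] Q_pos[of "Suc (m+j)" L] ji unfolding L_def by linarith
  have Dl: "D j i = spow (x L) (N * (?W - 1))" using D_lev[OF ji Li] unfolding L_def by simp
  have D1: "N * (?W - 1) \<ge> 1" using N_pos W2 by (simp add: Suc_le_eq)
  have "D j i * u j = spow (x L) (N * (?W - 1) + (c * ?Z - N * ?W))" by (simp only: Dl uj(1) spow_add[OF D1 uj(2)])
  also have "N * (?W - 1) + (c * ?Z - N * ?W) = c * ?Z - N"
  proof -
    have "N * (?W - 1) = N * ?W - N" by (simp add: diff_mult_distrib2)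
    moreover have "N \<le> N * ?W" using W2 by simp
    ultimately show ?thesis using uj(2) by linarith
  qed
  finally show ?thesis using ui by simp
qed

lemma D_e: "j < i \<Longrightarrow> D j i * e = e"
proof -
  assume ji: "j < i"
  have "Q (m + j) (m + i) \<ge> 2" using Q_lt[of "m+j" "m+i"] Q_pos[of "Suc (m+j)" "m+i"] ji by linarith
  then show ?thesis unfolding D_def using N_kill by simp
qed

lemma D_root: "j < i \<Longrightarrow> rootof e (D j i)"
proof -
  assume ji: "j < i"
  have "Q (m + j) (m + i) \<ge> 2" using Q_lt[of "m+j" "m+i"] Q_pos[of "Suc (m+j)" "m+i"] ji by linarith
  then have "N * (Q (m + j) (m + i) - 1) \<ge> 1" using N_pos by (simp add: Suc_le_eq)
  then show ?thesis unfolding D_def by (rule root_pow)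
qed

lemma u_notH: "u j * e \<noteq> u j"
proof
  assume fx: "u j * e = u j"
  define L where "L = m + j"
  let ?Z = "Q m L"
  have uj: "u j = spow (x L) (c * ?Z - N * 1)" using u_lev(1)[of j L] unfolding L_def by simp
  have E1: "c * ?Z - N * 1 \<ge> 1" using u_lev(2)[of j L] unfolding L_def by simp
  have "c * ?Z \<le> ?Z * (M - 1)" using mult_le_mono1[OF c_facts(1), of ?Z] by (simp add: mult.commute)
  then have le: "c * ?Z - N * 1 \<le> ?Z * (M - 1)" by linarith
  have fx2: "spow (x L) (c * ?Z - N * 1) * e = spow (x L) (c * ?Z - N * 1)" using fx uj by simp
  have f1: "spow (x L) (?Z * (M - 1)) * e = spow (x L) (?Z * (M - 1))"
    by (rule pow_up[OF _ E1 le fx2]) (rule e_cent)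
  have f2: "spow (x m) (M - 1) = spow (x L) (?Z * (M - 1))"
    using pow_lev[of m L "M - 1"] M_big N_pos unfolding L_def by simp
  have "1 \<le> M - 1" "M - 1 < M" using M_big N_pos by auto
  then have "spow (x m) (M - 1) * e \<noteq> spow (x m) (M - 1)" by (rule Mmin)
  then show False using f1 f2 by simp
qed

lemma D_cmp:
  assumes jk: "j < k" and jj: "j < j'" and kk: "k < k'"
  shows "\<exists>c. rootof e c \<and> (D k k' = c * D j j' \<or> D j j' = c * D k k')"
proof -
  define L where "L = m + max j' k'"
  have L1: "m + j' \<le> L" "m + k' \<le> L" unfolding L_def by auto
  let ?W = "\<lambda>i. Q (m + i) L"
  have dj: "D j j' = spow (x L) (N * (?W j - ?W j'))" using D_lev[OF jj L1(1)] .
  have dk: "D k k' = spow (x L) (N * (?W k - ?W k'))" using D_lev[OF kk L1(2)] .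
  have w1: "?W j \<ge> 2 * ?W (Suc j)" using Q_lt[of "m+j" L] L1 jj by simp
  have w2: "?W j' \<le> ?W (Suc j)" using Q_mono[of "m + Suc j" "m + j'" L] L1 jj by simp
  have w3: "?W k \<le> ?W (Suc j)" using Q_mono[of "m + Suc j" "m + k" L] L1 jk kk by simp
  have w4: "?W k \<ge> 2 * ?W (Suc k)" using Q_lt[of "m+k" L] L1 kk by simp
  have w5: "?W k' \<le> ?W (Suc k)" using Q_mono[of "m + Suc k" "m + k'" L] L1 kk by simp
  have w6: "?W k' \<ge> 1" by (rule Q_pos)
  have w7: "?W (Suc j) \<ge> 1" by (rule Q_pos)
  have a1: "?W (Suc j) \<le> ?W j - ?W j'" using w1 w2 by linarith
  have b0: "?W k' \<le> ?W k" using w4 w5 by linarith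
  have b1: "?W k - ?W k' < ?W k" using b0 w6 by linarith
  have lt: "?W k - ?W k' < ?W j - ?W j'" using a1 b1 w3 by linarith
  have pos: "?W k - ?W k' \<ge> 1" using w4 w5 w6 by linarith
  define A where "A = N * (?W j - ?W j')"
  define B where "B = N * (?W k - ?W k')"
  have BA: "B < A" unfolding A_def B_def using lt N_pos by simp
  have B1: "B \<ge> 1" unfolding B_def using pos N_pos by (simp add: Suc_le_eq)
  have AB1: "A - B \<ge> 1" using BA by simp
  have dj': "D j j' = spow (x L) ((A - B) + B)" using dj BA unfolding A_def by simp
  have dkB: "D k k' = spow (x L) B" using dk unfolding B_def .
  have "spow (x L) ((A - B) + B) = spow (x L) (A - B) * D k k'" by (simp only: spow_add[OF AB1 B1] dkB)
  with dj' have "D j j' = spow (x L) (A - B) * D k k'" by simp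
  then show ?thesis using root_pow[OF AB1] by blast
qed

lemma germ: "germ e u D"
proof unfold_locales
  show "e * e = e" by (rule e_idem)
  show "e * z = z * e" for z by (rule e_cent)
  show "u j * z = z * u j" for j z by (rule u_cent)
  show "u j * u i = e" for j i by (rule u_prod)
  show "j < i \<Longrightarrow> u i = D j i * u j" for j i by (rule u_D)
  show "j < i \<Longrightarrow> D j i * e = e" for j i by (rule D_e)
  show "j < i \<Longrightarrow> rootof e (D j i)" for j i by (rule D_root)
  show "u j * e \<noteq> u j" for j by (rule u_notH)
  show "j < k \<Longrightarrow> j < j' \<Longrightarrow> k < k' \<Longrightarrow> \<exists>c. rootof e c \<and> (D k k' = c * D j j' \<or> D j j' = c * D k k')"
    for j k j' k' by (rule D_cmp)
qed

end

definition enco :: "'a option \<Rightarrow> 'a set" where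
  "enco y = (case y of None \<Rightarrow> {} | Some a \<Rightarrow> {a})"

lemma inj_enco: "inj enco"
  unfolding inj_def enco_def by (auto split: option.splits)

definition encY :: "'a \<Rightarrow> 'a \<Rightarrow> ('a + 'a option set) \<Rightarrow> 'a set set" where
  "encY a0 b0 y = (case y of Inl x \<Rightarrow> {{x}} | Inr S \<Rightarrow> insert {a0, b0} (enco ` S))"

lemma inj_encY:
  assumes ab: "a0 \<noteq> b0" shows "inj (encY a0 b0)"
proof (rule injI)
  have nin: "{a0, b0} \<notin> enco ` S" for S
  proof
    assume "{a0, b0} \<in> enco ` S"
    then obtain y where "{a0, b0} = enco y" by blast
    then show False using ab by (cases y) (auto simp: enco_def doubleton_eq_iff)
  qed
  fix y z assume eq: "encY a0 b0 y = encY a0 b0 z"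
  show "y = z"
  proof (cases y; cases z)
    fix a b assume "y = Inl a" "z = Inl b" then show ?thesis using eq by (simp add: encY_def)
  next
    fix a S assume h: "y = Inl a" "z = Inr S"
    then have "{{a}} = insert {a0, b0} (enco ` S)" using eq by (simp add: encY_def)
    then have "{a0, b0} = {a}" by blast
    then show ?thesis using ab by (simp add: doubleton_eq_iff)
  next
    fix a S assume h: "y = Inr S" "z = Inl a"
    then have "{{a}} = insert {a0, b0} (enco ` S)" using eq by (simp add: encY_def)
    then have "{a0, b0} = {a}" by blast
    then show ?thesis using ab by (simp add: doubleton_eq_iff)
  next
    fix S S' assume h: "y = Inr S" "z = Inr S'"
    then have "insert {a0, b0} (enco ` S) = insert {a0, b0} (enco ` S')" using eq by (simp add: encY_def)
    then have "enco ` S = enco ` S'" using nin[of S] nin[of S'] by (metis insert_ident)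
    then have "S = S'" by (rule inj_image_eq_iff[OF inj_enco, THEN iffD1])
    then show ?thesis using h by simp
  qed
qed

theorem lemma5p7:
  fixes e :: "'a::semigroup_mult" and x :: "nat \<Rightarrow> 'a"
  assumes "TzS_closed TYPE('a)"
    and "e \<in> idempotents"
    and "bounded_subsemigroup (maxsubgroup e \<inter> center)"
    and "\<And>n. x n \<in> (inf_root e \<inter> center) - maxsubgroup e"
  shows "\<exists>n. x n \<notin> {spow (x (Suc n)) p | p. p \<ge> 2}"
proof (rule ccontr)
  assume neg: "\<not> (\<exists>n. x n \<notin> {spow (x (Suc n)) p | p. p \<ge> 2})"
  have step: "\<exists>p\<ge>2. x n = spow (x (Suc n)) p" for n using neg by blast
  have ee: "e * e = e" using assms(2) by (simp add: idempotents_def)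
  have xc: "x n * z = z * x n" for n z using assms(4)[of n] by (auto simp: center_def)
  have xr: "\<exists>K\<ge>1. spow (x n) K = e" for n using assms(4)[of n] by (auto simp: inf_root_def)
  have xH: "x n \<notin> maxsubgroup e" for n using assms(4)[of n] by blast
  obtain N where N: "N \<ge> 1" "\<forall>g\<in>maxsubgroup e \<inter> center. spow g N * spow g N = spow g N"
    using assms(3) unfolding bounded_subsemigroup_def by blast
  have xnf: "x n * e \<noteq> x n" for n
  proof
    assume h: "x n * e = x n"
    obtain K where K: "K \<ge> 1" "spow (x n) K = e" using xr by blast
    have "x n \<in> maxsubgroup e" by (rule inH[OF ee _ K h]) (rule xc)
    then show False using xH by blast
  qed
  have Nk: "spow (x n) (N * t) * e = e" if t: "t \<ge> 1" for n t
  proof -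
    obtain K where K: "K \<ge> 1" "spow (x n) K = e" using xr by blast
    have ec: "e * w = w * e" for w using spow_comm[of "x n" w K] xc K by simp
    define g where "g = x n * e"
    have gc: "g * w = w * g" for w
    proof -
      have "g * w = x n * (e * w)" by (simp add: g_def mult.assoc)
      also have "\<dots> = (x n * w) * e" using ec by (simp add: mult.assoc)
      also have "\<dots> = w * g" using xc by (simp add: g_def mult.assoc)
      finally show ?thesis .
    qed
    have xe: "x n * e = e * x n" by (rule ec[symmetric])
    have gpow: "spow g j = spow (x n) j * e" for j
      using spow_distrib[OF xe, of j] spow_idem[OF ee] by (simp add: g_def)
    have gK: "spow g K = e" using gpow K ee by simp
    have ge: "g * e = g" by (simp add: g_def mult.assoc ee)
    have gH: "g \<in> maxsubgroup e" by (rule inH[OF ee _ K(1) gK ge]) (rule gc)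
    have gZ: "g \<in> center" using gc by (simp add: center_def)
    have fi: "spow g N * spow g N = spow g N" using N(2) gH gZ by blast
    have "spow (spow g N) K = spow g N" using spow_idem[OF fi] .
    moreover have "spow (spow g N) K = spow g (N * K)" using spow_mult N(1) K(1) by simp
    moreover have "spow g (N * K) = spow (spow g K) N" using spow_mult[of K N g] N(1) K(1) by (simp add: mult.commute)
    ultimately have gN: "spow g N = e" using gK spow_idem[OF ee] by simp
    have "spow (x n) (N * t) * e = spow g (N * t)" using gpow by simp
    also have "\<dots> = spow (spow g N) t" using spow_mult[of N t g] N(1) t by simp
    also have "\<dots> = e" using gN spow_idem[OF ee] by simp
    finally show ?thesis .
  qed
  interpret nt e x N
    by unfold_locales (use ee xc xr xnf N(1) Nk step in auto)
  obtain T :: "('a + 'a option set) topology" and m where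
    Y: "TzS T m" "\<forall>x y. Inl (x * y) = m (Inl x) (Inl y)"
       "embedding_map (discrete_topology UNIV) T Inl" "\<not> closedin T (range Inl)"
    using germ.Y_exists[OF germ] by blast
  have ne: "e \<noteq> x 0" using xnf[of 0] ee by auto
  obtain T' :: "'a set set topology" and m' and h' :: "'a \<Rightarrow> 'a set set" where
    Z: "TzS T' m'" "\<forall>x y. h' (x * y) = m' (h' x) (h' y)"
       "embedding_map (discrete_topology UNIV) T' h'" "\<not> closedin T' (range h')"
    using transfer[OF Y inj_encY[OF ne]] by blast
  have "closedin T' (range h')" using assms(1) Z(1-3) unfolding TzS_closed_def by blast
  then show False using Z(4) by blast
qed


end
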